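(* Let $p$ be an odd prime, $q=p^m$, and let $k$ be an integer with $0<k<m$. Let $b,c\in\mathbb F_{q^2}$ with $\mathrm N(b)\ne\mathrm N(c)$, let $\ell(x)=(bx^q+cx)^{p^k}$ and $f(x)=x^{q+1}+\ell(x^2)$. Then $f$ is a planar function on $\mathbb F_{q^2}$ if and only if $p^k\equiv1\pmod4$, $m=2k$, and \[\mathrm N(b-c^q)^{\frac{p^k+1}2}=-(\mathrm N(b)-\mathrm N(c))^{p^k+1}.\]
   Context: $\mathrm N$ denotes the norm from $\mathbb F_{q^2}$ to $\mathbb F_q$, $\mathrm N(u)=u^{q+1}$. A function $f$ on $\mathbb F_{q^n}$ is planar if for every $c\in\mathbb F_{q^n}^*$ the map $x\mapsto f(x+c)-f(x)$ is a permutation of $\mathbb F_{q^n}$. *)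

theory Defs
  imports "HOL-Computational_Algebra.Primes"
begin

definition normq :: "nat \<Rightarrow> 'a::field \<Rightarrow> 'a" where
  "normq q u = u ^ (q + 1)"

definition planar :: "('a::{field,finite} \<Rightarrow> 'a) \<Rightarrow> bool" where
  "planar f \<longleftrightarrow> (\<forall>c. c \<noteq> 0 \<longrightarrow> bij (\<lambda>x. f (x + c) - f x))"

end

theory Submission
  imports Defs "HOL-Number_Theory.Residues" "HOL-Computational_Algebra.Polynomial"
begin

lemma fiber_card_le:
  assumes "finite A" "\<And>x. x \<in> A \<Longrightarrow> card {x'\<in>A. h x' = h x} \<le> k"
  shows "card A \<le> card (h ` A) * k"
proof -
  have "card A = (\<Sum>y\<in>h ` A. card {x\<in>A. h x = y})"
    using sum.group[where ?g=h and ?h="\<lambda>_. 1::nat", OF assms(1) finite_imageI[OF assms(1)]]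
    by simp
  also have "\<dots> \<le> (\<Sum>y\<in>h ` A. k)"
    by (rule sum_mono) (auto intro: assms(2))
  finally show ?thesis by simp
qed

lemma fiber_card_eq:
  assumes "finite A" "\<And>x. x \<in> A \<Longrightarrow> card {x'\<in>A. h x' = h x} = k"
  shows "card A = card (h ` A) * k"
proof -
  have "card A = (\<Sum>y\<in>h ` A. card {x\<in>A. h x = y})"
    using sum.group[where ?g=h and ?h="\<lambda>_. 1::nat", OF assms(1) finite_imageI[OF assms(1)]]
    by simp
  also have "\<dots> = (\<Sum>y\<in>h ` A. k)"
    by (rule sum.cong) (auto intro: assms(2))
  finally show ?thesis by simp
qed

lemma card_roots_pow:
  fixes c :: "'a::field"
  assumes "0 < a"
  shows "card {x. x ^ a = c} \<le> a"
proof -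
  let ?P = "monom (1::'a) a + [:-c:]"
  have d: "degree ?P = a" using assms by (simp add: degree_add_eq_left degree_monom_eq)
  have "?P \<noteq> 0" using d assms by auto
  moreover have "{x. x ^ a = c} = {x. poly ?P x = 0}" by (auto simp: poly_monom algebra_simps)
  ultimately show ?thesis using card_poly_roots_bound[of ?P] d by (simp add: poly_monom)
qed

lemma card_roots_frob:
  assumes "1 < a"
  shows "card {x::'a::field. x ^ a = x} \<le> a"
proof -
  let ?P = "monom (1::'a) a + [:0,-1:]"
  have d: "degree ?P = a" using assms by (simp add: degree_add_eq_left degree_monom_eq)
  have "?P \<noteq> 0" using d assms by auto
  moreover have "{x. x ^ a = x} = {x. poly ?P x = 0}" by (auto simp: poly_monom algebra_simps)
  ultimately show ?thesis using card_poly_roots_bound[of ?P] d by (simp add: poly_monom)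
qed

lemma card_roots_add:
  assumes "1 < a"
  shows "card {x::'a::field. x ^ a + x = 0} \<le> a"
proof -
  let ?P = "monom (1::'a) a + [:0,1:]"
  have d: "degree ?P = a" using assms by (simp add: degree_add_eq_left degree_monom_eq)
  have "?P \<noteq> 0" using d assms by auto
  moreover have "{x. x ^ a + x = 0} = {x. poly ?P x = 0}" by (auto simp: poly_monom algebra_simps)
  ultimately show ?thesis using card_poly_roots_bound[of ?P] d by (simp add: poly_monom)
qed

lemma pow_image_card:
  fixes A :: "'a::field set"
  assumes "finite A" "0 \<notin> A" "\<And>x y. x \<in> A \<Longrightarrow> y \<in> A \<Longrightarrow> x / y \<in> A"
    "\<And>x y. x \<in> A \<Longrightarrow> y \<in> A \<Longrightarrow> x * y \<in> A"
  shows "card A \<le> card ((\<lambda>x. x ^ a) ` A) * card {w\<in>A. w ^ a = 1}"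
proof (rule fiber_card_le[OF assms(1)])
  fix x assume x: "x \<in> A"
  have x0: "x \<noteq> 0" using x assms(2) by auto
  have "{x'\<in>A. x' ^ a = x ^ a} = (\<lambda>w. x * w) ` {w\<in>A. w ^ a = 1}"
  proof safe
    fix x' assume "x' \<in> A" "x' ^ a = x ^ a"
    then show "x' \<in> (*) x ` {w \<in> A. w ^ a = 1}"
      using x0 assms(3)[OF \<open>x' \<in> A\<close> x]
      by (intro image_eqI[of _ _ "x'/x"]) (auto simp: power_divide)
  next
    fix w assume "w \<in> A" "w ^ a = 1"
    then show "x * w \<in> A" "(x * w) ^ a = x ^ a" using assms(4) x by (auto simp: power_mult_distrib)
  qed
  also have "card \<dots> = card {w\<in>A. w ^ a = 1}"
    by (rule card_image) (use x0 in \<open>auto intro: inj_onI\<close>)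
  finally show "card {x'\<in>A. x' ^ a = x ^ a} \<le> card {w\<in>A. w ^ a = 1}" by simp
qed


locale ffq =
  fixes p m q :: nat and ty :: "'a::{field,finite} itself"
  assumes p_prime: "prime p" and p_odd: "odd p" and q_def: "q = p ^ m" and m_pos: "0 < m"
    and card_UNIV: "card (UNIV :: 'a set) = q ^ 2"
begin

lemma CHAR_eq: "CHAR('a) = p"
proof -
  have pos: "CHAR('a) > 0" by (rule finite_imp_CHAR_pos) simp
  have pr: "prime CHAR('a)" by (rule prime_CHAR_semidom[OF pos])
  have "CHAR('a) dvd p ^ (m * 2)" using CHAR_dvd_CARD[where ?'a='a] card_UNIV q_def
    by (simp add: power_mult)
  then have "CHAR('a) dvd p" using prime_dvd_power pr by blast
  then show ?thesis using pr p_prime primes_dvd_imp_eq by blast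
qed

lemma of_nat_p [simp]: "of_nat p = (0::'a)"
  using of_nat_CHAR[where ?'a='a] CHAR_eq by simp

lemma prime_CHAR: "prime CHAR('a)" using CHAR_eq p_prime by simp

lemma two_ne0: "(2::'a) \<noteq> 0"
proof
  assume "(2::'a) = 0"
  then have "of_nat 2 = (0::'a)" by simp
  then have "p dvd 2" using of_nat_eq_0_iff_char_dvd[where ?'a='a] CHAR_eq by metis
  then have "p \<le> 2" by (simp add: dvd_imp_le)
  moreover have "p \<ge> 2" using p_prime prime_ge_2_nat by blast
  ultimately show False using p_odd by auto
qed

lemma frob_add: "(x + y :: 'a) ^ (p ^ j) = x ^ (p ^ j) + y ^ (p ^ j)"
  using freshmans_dream'[OF prime_CHAR, of "p ^ j" j] CHAR_eq by simp

lemma odd_ppow: "odd (p ^ j)" using p_odd by simp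

lemma frob_neg: "(- x :: 'a) ^ (p ^ j) = - (x ^ (p ^ j))"
  using odd_ppow[of j] by (simp add: power_minus_odd)

lemma frob_diff: "(x - y :: 'a) ^ (p ^ j) = x ^ (p ^ j) - y ^ (p ^ j)"
  using frob_add[of x "-y" j] frob_neg[of y j] by simp

lemma frob_two: "(2 :: 'a) ^ (p ^ j) = 2"
  using frob_add[of 1 1 j] by simp

lemma p_ge3: "p \<ge> 3"
  using p_prime p_odd prime_ge_2_nat[of p] by presburger

lemma q_ge3: "q \<ge> 3"
proof -
  have "p ^ 1 \<le> p ^ m" using m_pos p_ge3 by (intro power_increasing) auto
  then show ?thesis using p_ge3 q_def by simp
qed

lemma q_odd: "odd q" using q_def p_odd by simp

lemma frobq_add: "(x + y :: 'a) ^ q = x ^ q + y ^ q" using frob_add q_def by simp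
lemma frobq_diff: "(x - y :: 'a) ^ q = x ^ q - y ^ q" using frob_diff q_def by simp
lemma frobq_neg: "(- x :: 'a) ^ q = - (x ^ q)" using frob_neg q_def by simp
lemma frobq_two: "(2 :: 'a) ^ q = 2" using frob_two q_def by simp

lemma pow_card: "(x :: 'a) ^ (q ^ 2) = x"
proof (cases "x = 0")
  case False
  have "x * (\<Prod>y\<in>UNIV-{0}. x * y) = x * x ^ (card (UNIV :: 'a set) - 1) * \<Prod>(UNIV-{0})"
    by (simp add: prod.distrib mult_ac)
  also have "x * x ^ (card (UNIV :: 'a set) - 1) = x ^ Suc (card (UNIV :: 'a set) - 1)"
    by (subst power_Suc) auto
  also have "Suc (card (UNIV :: 'a set) - 1) = card (UNIV :: 'a set)"
    using finite_UNIV_card_ge_0[where ?'a = 'a] by simp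
  also have "(\<Prod>y\<in>UNIV-{0}. x * y) = (\<Prod>y\<in>UNIV-{0}. y)"
    by (rule prod.reindex_bij_witness[of _ "\<lambda>y. y / x" "\<lambda>y. x * y"]) (use False in auto)
  finally show ?thesis
    using card_UNIV by simp
qed (use q_ge3 in auto)

lemma pow_qq: "((x :: 'a) ^ q) ^ q = x"
  using pow_card[of x] by (simp add: power_mult[symmetric] power2_eq_square)

lemma card_F: "card {x::'a. x ^ q = x} = q"
proof -
  let ?F = "{x::'a. x ^ q = x}"
  let ?h = "\<lambda>x::'a. x ^ q - x"
  have fib: "card {x'\<in>UNIV. ?h x' = ?h x} = card ?F" for x
  proof -
    have "{x'\<in>UNIV. ?h x' = ?h x} = (\<lambda>f. f + x) ` ?F"
    proof safe
      fix x' :: 'a assume "x' ^ q - x' = x ^ q - x"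
      then show "x' \<in> (\<lambda>f. f + x) ` ?F"
        by (intro image_eqI[of _ _ "x' - x"]) (auto simp: frobq_diff algebra_simps)
    next
      fix f :: 'a assume "f ^ q = f"
      then show "(f + x) ^ q - (f + x) = x ^ q - x" by (simp add: frobq_add)
    qed simp
    also have "card \<dots> = card ?F" by (rule card_image) (auto intro: inj_onI)
    finally show ?thesis .
  qed
  have c1: "card (UNIV::'a set) \<le> card (?h ` UNIV) * card ?F"
    by (rule fiber_card_le) (use fib in auto)
  have "?h ` UNIV \<subseteq> {y. y ^ q + y = 0}"
    by (auto simp: frobq_diff pow_qq)
  then have "card (?h ` UNIV) \<le> card {y::'a. y ^ q + y = 0}"
    by (intro card_mono) auto
  also have "\<dots> \<le> q" using card_roots_add[of q] q_ge3 by simp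
  finally have "card (?h ` UNIV) \<le> q" .
  then have "q * q \<le> q * card ?F" using card_UNIV c1
  proof -
    have "q * q \<le> card (?h ` UNIV) * card ?F" using c1 card_UNIV by (simp add: power2_eq_square)
    also have "\<dots> \<le> q * card ?F" using \<open>card (?h ` UNIV) \<le> q\<close> by (rule mult_right_mono) simp
    finally show ?thesis .
  qed
  then have "q \<le> card ?F" using q_ge3 by simp
  moreover have "card ?F \<le> q" using card_roots_frob[of q] q_ge3 by simp
  ultimately show ?thesis by simp
qed

end


context ffq
begin

lemma pow_pm1:
  assumes "(a::'a) ^ N = a" "a \<noteq> 0" "odd N"
  shows "a ^ ((N - 1) div 2) = 1 \<or> a ^ ((N - 1) div 2) = -1"
proof -
  have N: "N = Suc (N - 1)" using assms(3) by presburger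
  have "a ^ (N - 1) = 1"
    using assms(1,2) N by (metis mult_cancel_left1 power_Suc)
  moreover have "N - 1 = 2 * ((N - 1) div 2)" using assms(3) by presburger
  ultimately have "(a ^ ((N - 1) div 2)) ^ 2 = 1"
    by (metis power_mult mult.commute)
  then show ?thesis by (simp add: power2_eq_1_iff)
qed

lemma euler:
  assumes cardS: "card {x::'a. x ^ N = x} = N" and N: "odd N" "N \<ge> 3" and a0: "(a::'a) \<noteq> 0"
  shows "(\<exists>b. b ^ N = b \<and> b ^ 2 = a) \<longleftrightarrow> a ^ ((N - 1) div 2) = 1"
proof -
  define S0 where "S0 = {x::'a. x ^ N = x} - {0}"
  define Sq where "Sq = (\<lambda>b. b ^ 2) ` S0"
  define R where "R = {a::'a. a ^ ((N - 1) div 2) = 1}"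
  have fin: "finite S0" by simp
  have cS0: "card S0 = N - 1"
    unfolding S0_def using cardS N by (subst card_Diff_singleton) (auto simp: power_0_left)
  have N1: "N = Suc (N - 1)" using N by presburger
  have N2: "N - 1 = 2 * ((N - 1) div 2)" using N by presburger
  have fib: "card {b'\<in>S0. b' ^ 2 = b ^ 2} = 2" if b: "b \<in> S0" for b
  proof -
    have b0: "b \<noteq> 0" using b by (auto simp: S0_def)
    have mb: "-b \<in> S0" using b N by (auto simp: S0_def power_minus_odd)
    have "{b'\<in>S0. b' ^ 2 = b ^ 2} = {b, -b}"
      using b mb by (auto simp: power2_eq_iff)
    moreover have "b \<noteq> -b"
    proof
      assume "b = -b"
      then have "2 * b = 0" by simp
      then show False using two_ne0 b0 by simp
    qed
    ultimately show ?thesis by simp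
  qed
  have "card S0 = card Sq * 2"
    unfolding Sq_def by (rule fiber_card_eq[OF fin]) (use fib in auto)
  then have cSq: "card Sq = (N - 1) div 2" using cS0 by simp
  have sub: "Sq \<subseteq> R"
  proof
    fix a assume "a \<in> Sq"
    then obtain b where b: "b \<in> S0" "a = b ^ 2" by (auto simp: Sq_def)
    have bN: "b ^ N = b" "b \<noteq> 0" using b by (auto simp: S0_def)
    have "b * b ^ (N - 1) = b * 1" using bN(1) N1 by (metis power_Suc mult_1_right)
    then have "b ^ (N - 1) = 1" using bN(2) by simp
    moreover have "a ^ ((N - 1) div 2) = b ^ (2 * ((N - 1) div 2))"
      using b(2) by (simp add: power_mult)
    ultimately show "a \<in> R" unfolding R_def using N2 by simp
  qed
  have "card R \<le> (N - 1) div 2"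
    unfolding R_def by (rule card_roots_pow) (use N in presburger)
  moreover have "card Sq \<le> card R" using sub by (intro card_mono) auto
  ultimately have "card Sq = card R" using cSq by simp
  then have "Sq = R"
    using sub by (intro card_subset_eq) auto
  then have "a \<in> Sq \<longleftrightarrow> a \<in> R" by simp
  moreover have "a \<in> Sq \<longleftrightarrow> (\<exists>b. b ^ N = b \<and> b ^ 2 = a)"
    using a0 by (auto simp: Sq_def S0_def)
  ultimately show ?thesis by (simp add: R_def)
qed

lemma q2_eq: "q ^ 2 - 1 = (q - 1) * (q + 1)"
  using q_ge3 by (simp add: power2_eq_square algebra_simps)

lemma every_F_square:
  assumes "(a::'a) ^ q = a"
  shows "\<exists>b. b ^ 2 = a"
proof (cases "a = 0")
  case False
  have cU: "card {x::'a. x ^ (q ^ 2) = x} = q ^ 2" using pow_card card_UNIV by simp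
  have "odd (q ^ 2)" using q_odd by simp
  moreover have "q ^ 2 \<ge> 3" using q_ge3 by (simp add: power2_eq_square) (meson le_trans le_square)
  moreover have "a ^ ((q ^ 2 - 1) div 2) = 1"
  proof -
    have "a ^ (q - 1) = 1"
    proof -
      have "a * a ^ (q - 1) = a * 1" using assms q_ge3 by (simp flip: power_Suc)
      then show ?thesis using False by simp
    qed
    moreover have "(q ^ 2 - 1) div 2 = (q - 1) * ((q + 1) div 2)"
    proof -
      obtain j where j: "q + 1 = 2 * j" using q_odd by (metis evenE odd_Suc_minus_one even_Suc Suc_eq_plus1)
      then show ?thesis using q2_eq by simp
    qed
    ultimately show ?thesis by (simp add: power_mult)
  qed
  ultimately show ?thesis using euler[OF cU] False by blast
qed auto

lemma hilbert90:
  assumes "(v::'a) ^ (q + 1) = 1"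
  shows "\<exists>c. c \<noteq> 0 \<and> c ^ (q - 1) = v"
proof -
  define A where "A = (UNIV::'a set) - {0}"
  have cA: "card A = q ^ 2 - 1" unfolding A_def using card_UNIV by (simp add: card_Diff_singleton)
  have "card A \<le> card ((\<lambda>x. x ^ (q - 1)) ` A) * card {w\<in>A. w ^ (q - 1) = 1}"
    by (rule pow_image_card) (auto simp: A_def)
  moreover have "card {w\<in>A. w ^ (q - 1) = 1} \<le> q - 1"
  proof -
    have "card {w\<in>A. w ^ (q - 1) = 1} \<le> card {w::'a. w ^ (q - 1) = 1}" by (intro card_mono) auto
    also have "\<dots> \<le> q - 1" by (rule card_roots_pow) (use q_ge3 in auto)
    finally show ?thesis .
  qed
  ultimately have "(q - 1) * (q + 1) \<le> card ((\<lambda>x. x ^ (q - 1)) ` A) * (q - 1)"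
    using cA q2_eq by (metis le_trans mult_le_mono2)
  then have h: "(q - 1) * (q + 1) \<le> (q - 1) * card ((\<lambda>x. x ^ (q - 1)) ` A)" by (simp add: mult.commute)
  have pos: "0 < q - 1" using q_ge3 by simp
  have c1: "q + 1 \<le> card ((\<lambda>x. x ^ (q - 1)) ` A)" using mult_le_cancel1[of "q - 1" "q + 1"] h pos by blast
  have sub: "(\<lambda>x. x ^ (q - 1)) ` A \<subseteq> {v. v ^ (q + 1) = 1}"
  proof clarify
    fix x :: 'a assume "x \<in> A"
    then have x0: "x \<noteq> 0" by (auto simp: A_def)
    have "q ^ 2 \<ge> 1" using q_ge3 by simp
    then have "Suc (q ^ 2 - 1) = q ^ 2" by simp
    then have "x * x ^ (q ^ 2 - 1) = x * 1" using pow_card[of x] by (metis power_Suc mult_1_right)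
    then have "x ^ (q ^ 2 - 1) = 1" using x0 by simp
    then show "(x ^ (q - 1)) ^ (q + 1) = 1" by (simp only: q2_eq power_mult)
  qed
  have "card {v::'a. v ^ (q + 1) = 1} \<le> q + 1" by (rule card_roots_pow) simp
  moreover have "card ((\<lambda>x. x ^ (q - 1)) ` A) \<le> card {v::'a. v ^ (q + 1) = 1}"
    using sub by (intro card_mono) auto
  ultimately have "card ((\<lambda>x. x ^ (q - 1)) ` A) = card {v::'a. v ^ (q + 1) = 1}" using c1 by linarith
  then have "(\<lambda>x. x ^ (q - 1)) ` A = {v. v ^ (q + 1) = 1}"
    using sub by (intro card_subset_eq) auto
  then have "v \<in> (\<lambda>x. x ^ (q - 1)) ` A" using assms by simp
  then show ?thesis by (auto simp: A_def)
qed

end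


context ffq
begin

lemma frob_inj:
  assumes "(a::'a) ^ (p ^ k) = b ^ (p ^ k)"
  shows "a = b"
proof -
  have "(a - b) ^ (p ^ k) = 0" using assms by (simp add: frob_diff)
  then show ?thesis by simp
qed

lemma norm_inF: "((a::'a) ^ (q + 1)) ^ q = a ^ (q + 1)"
proof -
  have "(a ^ (q + 1)) ^ q = (a ^ q) ^ q * a ^ q" by (simp add: power_mult_distrib flip: power_mult)
  also have "\<dots> = a * a ^ q" by (simp add: pow_qq)
  finally show ?thesis by (simp add: mult.commute)
qed

lemma pow_comm: "((z::'a) ^ a) ^ b = (z ^ b) ^ a"
  by (simp flip: power_mult add: mult.commute)

lemma f_add:
  fixes x y \<beta> \<gamma> :: 'a
  assumes r: "r = p ^ k"
  shows "(x + y) ^ (q + 1) + (\<beta> * ((x + y) ^ 2) ^ q + \<gamma> * (x + y) ^ 2) ^ r =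
     (x ^ (q + 1) + (\<beta> * (x ^ 2) ^ q + \<gamma> * x ^ 2) ^ r) + (y ^ (q + 1) + (\<beta> * (y ^ 2) ^ q + \<gamma> * y ^ 2) ^ r)
     + (x ^ q * y + x * y ^ q + 2 * (\<beta> * (x * y) ^ q + \<gamma> * (x * y)) ^ r)"
proof -
  have r2: "(2::'a) ^ r = 2" using frob_two r by simp
  have ra: "(a + b :: 'a) ^ r = a ^ r + b ^ r" for a b using frob_add r by simp
  have e1: "(x + y) ^ (q + 1) = x ^ (q + 1) + y ^ (q + 1) + (x ^ q * y + x * y ^ q)"
    by (simp add: frobq_add algebra_simps)
  have sq: "(x + y) ^ 2 = x ^ 2 + 2 * (x * y) + y ^ 2" by (simp add: power2_eq_square algebra_simps)
  have e2: "((x + y) ^ 2) ^ q = (x ^ 2) ^ q + 2 * (x * y) ^ q + (y ^ 2) ^ q"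
    unfolding sq by (simp add: frobq_add frobq_two power_mult_distrib)
  define A where "A = \<beta> * (x ^ 2) ^ q + \<gamma> * x ^ 2"
  define C where "C = \<beta> * (y ^ 2) ^ q + \<gamma> * y ^ 2"
  define G where "G = \<beta> * (x * y) ^ q + \<gamma> * (x * y)"
  have "\<beta> * ((x + y) ^ 2) ^ q + \<gamma> * (x + y) ^ 2 = A + 2 * G + C"
    unfolding A_def C_def G_def by (subst e2, subst sq) (simp add: algebra_simps)
  then have "(\<beta> * ((x + y) ^ 2) ^ q + \<gamma> * (x + y) ^ 2) ^ r = A ^ r + 2 * G ^ r + C ^ r"
    by (simp add: ra power_mult_distrib r2)
  then show ?thesis unfolding e1 A_def C_def G_def by (simp add: algebra_simps)
qed

end


context ffq
begin

lemma ppow_pos: "p ^ k \<ge> 1" using p_ge3 by simp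

lemma planar_iff_P:
  fixes \<beta> \<gamma> :: 'a
  assumes r: "r = p ^ k" and nb: "\<beta> ^ (q + 1) \<noteq> \<gamma> ^ (q + 1)"
  defines "\<Delta> \<equiv> \<gamma> ^ (q + 1) - \<beta> ^ (q + 1)"
  defines "d \<equiv> (\<gamma> ^ q - \<beta>) / \<Delta>"
  defines "n \<equiv> d ^ (q + 1)"
  shows "planar (\<lambda>x. x ^ (q + 1) + (\<beta> * (x ^ 2) ^ q + \<gamma> * x ^ 2) ^ r) \<longleftrightarrow>
    (\<forall>s::'a. s ^ q = s \<longrightarrow> s \<noteq> 0 \<longrightarrow> (\<exists>t. t ^ q = t \<and> t \<noteq> 0 \<and> t ^ 2 = s ^ (2 * (r - 1)) - n))"
    (is "planar ?f \<longleftrightarrow> ?P")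
proof -
  define ell where "ell u = (\<beta> * u ^ q + \<gamma> * u) ^ r" for u :: 'a
  define B where "B x y = x ^ q * y + x * y ^ q + 2 * ell (x * y)" for x y :: 'a
  have r1: "r \<ge> 1" using r ppow_pos by simp
  have rpow_add: "(a + b :: 'a) ^ r = a ^ r + b ^ r" for a b using frob_add r by simp
  have rpow_diff: "(a - b :: 'a) ^ r = a ^ r - b ^ r" for a b using frob_diff r by simp
  have rinj: "a ^ r = b ^ r \<Longrightarrow> a = b" for a b :: 'a using frob_inj r by blast
  have Delta0: "\<Delta> \<noteq> 0" using nb by (simp add: \<Delta>_def)
  have DeltaF: "\<Delta> ^ q = \<Delta>" unfolding \<Delta>_def by (simp only: frobq_diff norm_inF)
  have dq: "d ^ q = (\<gamma> - \<beta> ^ q) / \<Delta>"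
    unfolding d_def by (simp add: power_divide frobq_diff pow_qq DeltaF)
  have key1: "\<beta> * d ^ q + \<gamma> * d = 1"
  proof -
    have "\<beta> * d ^ q + \<gamma> * d = (\<beta> * (\<gamma> - \<beta> ^ q) + \<gamma> * (\<gamma> ^ q - \<beta>)) / \<Delta>"
      by (subst dq) (simp add: d_def add_divide_distrib)
    also have "\<beta> * (\<gamma> - \<beta> ^ q) + \<gamma> * (\<gamma> ^ q - \<beta>) = \<Delta>"
      unfolding \<Delta>_def by (simp add: algebra_simps)
    finally show ?thesis using Delta0 by simp
  qed
  have d0: "d \<noteq> 0"
  proof
    assume "d = 0"
    then have "\<gamma> ^ q = \<beta>" using Delta0 by (simp add: d_def)
    then have "\<beta> ^ (q + 1) = (\<gamma> ^ q) ^ (q + 1)" by simp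
    also have "\<dots> = (\<gamma> ^ (q + 1)) ^ q" by (rule pow_comm)
    finally have "\<beta> ^ (q + 1) = (\<gamma> ^ (q + 1)) ^ q" .
    then show False using nb norm_inF by simp
  qed
  have n0: "n \<noteq> 0" using d0 by (simp add: n_def)
  have nF: "n ^ q = n" unfolding n_def by (rule norm_inF)
  have ell_sd: "ell (s * d) = s ^ r" if "s ^ q = s" for s
  proof -
    have "\<beta> * (s * d) ^ q + \<gamma> * (s * d) = s * (\<beta> * d ^ q + \<gamma> * d)"
      using that by (simp add: power_mult_distrib algebra_simps)
    then show ?thesis using key1 by (simp add: ell_def)
  qed
  have fadd: "?f (x + y) - ?f x = ?f y + B x y" for x y
    using f_add[OF r, of x y \<beta> \<gamma>] by (simp add: B_def ell_def algebra_simps)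
  have Bdiff: "B a y - B b y = B (a - b) y" for a b y
  proof -
    have "ell (a * y) - ell (b * y) = ell ((a - b) * y)"
      unfolding ell_def by (simp add: rpow_diff[symmetric] frobq_diff algebra_simps)
    then show ?thesis unfolding B_def by (simp add: frobq_diff algebra_simps flip: \<open>ell (a * y) - ell (b * y) = ell ((a - b) * y)\<close>)
  qed
  have B0: "B 0 y = 0" for y
  proof -
    have "ell 0 = 0" unfolding ell_def using r1 q_ge3 by (simp add: power_0_left)
    then show ?thesis unfolding B_def using q_ge3 by (simp add: power_0_left)
  qed
  have noB: "x = 0" if P: ?P and y0: "y \<noteq> 0" and Bxy: "B x y = 0" for x y
  proof (rule ccontr)
    assume x0: "x \<noteq> 0"
    define u where "u = x * y"
    define v where "v = x * y ^ q"
    have u0: "u \<noteq> 0" using x0 y0 by (simp add: u_def)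
    have vq: "v ^ q = x ^ q * y" unfolding v_def by (simp add: power_mult_distrib pow_qq)
    have Buv: "v ^ q + v + 2 * ell u = 0" by (subst vq) (use Bxy in \<open>simp add: B_def u_def v_def\<close>)
    have Nv: "v ^ (q + 1) = u ^ (q + 1)"
    proof -
      have "v ^ (q + 1) = x ^ (q + 1) * (y ^ q) ^ (q + 1)" by (simp add: v_def power_mult_distrib)
      also have "(y ^ q) ^ (q + 1) = y ^ (q + 1)" by (simp only: pow_comm[of y q "q + 1"] norm_inF)
      finally show ?thesis by (simp add: u_def power_mult_distrib)
    qed
    define w where "w = \<beta> * u ^ q + \<gamma> * u"
    have ellw: "ell u = w ^ r" by (simp add: ell_def w_def)
    have trF: "(v ^ q + v) ^ q = v ^ q + v" by (simp add: frobq_add pow_qq)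
    have wr: "w ^ r = - (v ^ q + v) / 2" using Buv ellw two_ne0
      by (simp add: field_simps) (metis add.commute add_eq_0_iff2 mult.commute)
    have X: "(- (v ^ q + v) / 2) ^ q = - (v ^ q + v) / 2"
      by (simp only: power_divide frobq_neg frobq_two trF)
    have "(w ^ r) ^ q = w ^ r" by (simp only: wr X)
    then have "(w ^ q) ^ r = w ^ r" by (simp add: pow_comm)
    then have wF: "w ^ q = w" by (rule rinj)
    have wq: "w ^ q = \<beta> ^ q * u + \<gamma> ^ q * u ^ q"
      unfolding w_def by (simp add: frobq_add power_mult_distrib pow_qq)
    have "\<gamma> ^ q * w - \<beta> * w ^ q = \<Delta> * u"
      unfolding \<Delta>_def wq by (simp add: w_def algebra_simps)
    then have "\<Delta> * u = w * (\<gamma> ^ q - \<beta>)" using wF by (simp add: algebra_simps)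
    then have usd: "u = w * d" using Delta0 by (simp add: d_def field_simps)
    have w0: "w \<noteq> 0" using u0 usd by auto
    obtain t where t: "t ^ q = t" "t \<noteq> 0" "t ^ 2 = w ^ (2 * (r - 1)) - n"
      using P wF w0 by blast
    define \<epsilon> where "\<epsilon> = (v - v ^ q) / 2"
    have eq: "\<epsilon> ^ q = - \<epsilon>" unfolding \<epsilon>_def
      by (simp add: power_divide frobq_diff frobq_two pow_qq) (simp add: two_ne0 field_simps)
    have ellu: "ell u = w ^ r" by (rule ellw)
    have "v + v ^ q + 2 * w ^ r = 0" using Buv ellu by (simp add: algebra_simps)
    then have sumv: "v + v ^ q = - 2 * w ^ r" by (simp add: eq_neg_iff_add_eq_0)
    have prodv: "v * v ^ q = w ^ 2 * n"
    proof -
      have "v * v ^ q = v ^ (q + 1)" by simp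
      also have "\<dots> = u ^ (q + 1)" by (rule Nv)
      also have "\<dots> = w ^ (q + 1) * n" by (simp add: usd n_def power_mult_distrib)
      also have "w ^ (q + 1) = w ^ 2" using wF by (simp add: power2_eq_square)
      finally show ?thesis .
    qed
    have w2r: "w ^ (2 * r) = w ^ 2 * w ^ (2 * (r - 1))"
    proof -
      have e: "2 * r = 2 + 2 * (r - 1)" using r1 by simp
      show ?thesis by (subst e) (rule power_add)
    qed
    have "\<epsilon> ^ 2 = ((v + v ^ q) ^ 2 - 4 * (v * v ^ q)) / 4"
      unfolding \<epsilon>_def by (simp add: power2_eq_square field_simps)
    also have "\<dots> = w ^ 2 * (w ^ (2 * (r - 1)) - n)"
    proof -
      have wr2: "(w ^ r) ^ 2 = w ^ (2 * r)" by (simp add: power_mult[symmetric] mult.commute)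
      have four: "(4::'a) \<noteq> 0" using two_ne0 by (metis mult_eq_0_iff numeral_Bit0_eq_double mult_2)
      have "(v + v ^ q) ^ 2 - 4 * (v * v ^ q) = 4 * (w ^ (2 * r) - w ^ 2 * n)"
        unfolding sumv prodv by (simp add: power_mult_distrib wr2 algebra_simps)
      then have "((v + v ^ q) ^ 2 - 4 * (v * v ^ q)) / 4 = w ^ (2 * r) - w ^ 2 * n"
        using four by simp
      then show ?thesis unfolding w2r by (simp add: algebra_simps)
    qed
    also have "\<dots> = (w * t) ^ 2" using t by (simp add: power_mult_distrib)
    finally have "\<epsilon> ^ 2 = (w * t) ^ 2" .
    then have "\<epsilon> = w * t \<or> \<epsilon> = - (w * t)" by (simp add: power2_eq_iff)
    then have "\<epsilon> ^ q = \<epsilon>" using wF t by (auto simp: power_mult_distrib frobq_neg)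
    then have "\<epsilon> = 0" using eq two_ne0 by (metis add_eq_0_iff2 mult_2 mult_eq_0_iff neg_equal_iff_equal)
    then have "w * t = 0" using \<open>\<epsilon> = w * t \<or> \<epsilon> = - (w * t)\<close> by auto
    then show False using w0 t(2) by simp
  qed
  show ?thesis
  proof
    assume P: ?P
    show "planar ?f" unfolding planar_def
    proof (intro allI impI)
      fix c :: 'a assume c0: "c \<noteq> 0"
      have "inj (\<lambda>x. ?f (x + c) - ?f x)"
      proof (rule injI)
        fix x1 x2 assume "?f (x1 + c) - ?f x1 = ?f (x2 + c) - ?f x2"
        then have "B x1 c = B x2 c" using fadd by simp
        then have "B (x1 - x2) c = 0" using Bdiff[of x1 c x2] by simp
        then have "x1 - x2 = 0" using noB[OF P c0] by blast
        then show "x1 = x2" by simp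
      qed
      then show "bij (\<lambda>x. ?f (x + c) - ?f x)" by (simp add: bij_def finite_UNIV_inj_surj)
    qed
  next
    assume pl: "planar ?f"
    show ?P
    proof (rule ccontr)
      assume "\<not> ?P"
      then obtain s where s: "s ^ q = s" "s \<noteq> 0"
        and nt: "\<forall>t. t ^ q = t \<longrightarrow> t \<noteq> 0 \<longrightarrow> t ^ 2 \<noteq> s ^ (2 * (r - 1)) - n" by blast
      define \<delta> where "\<delta> = s ^ (2 * (r - 1)) - n"
      have \<delta>F: "\<delta> ^ q = \<delta>"
      proof -
        have "(s ^ (2 * (r - 1))) ^ q = s ^ (2 * (r - 1))" by (simp only: pow_comm[of s _ q] s(1))
        then show ?thesis unfolding \<delta>_def by (simp only: frobq_diff nF)
      qed
      obtain \<epsilon> where e: "\<epsilon> ^ 2 = \<delta>" "\<epsilon> ^ q = - \<epsilon>"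
      proof (cases "\<delta> = 0")
        case True then show ?thesis using that[of 0] q_ge3 by (simp add: power_0_left)
      next
        case False
        obtain \<epsilon> where e2: "\<epsilon> ^ 2 = \<delta>" using every_F_square[OF \<delta>F] by blast
        have "(\<epsilon> ^ q) ^ 2 = \<epsilon> ^ 2" using e2 \<delta>F by (simp only: pow_comm[of \<epsilon> q 2])
        then have "\<epsilon> ^ q = \<epsilon> \<or> \<epsilon> ^ q = - \<epsilon>" by (simp add: power2_eq_iff)
        moreover have "\<epsilon> ^ q \<noteq> \<epsilon>"
        proof
          assume "\<epsilon> ^ q = \<epsilon>"
          moreover have "\<epsilon> \<noteq> 0" using False e2 by auto
          ultimately show False using nt e2 by (auto simp: \<delta>_def)
        qed
        ultimately show ?thesis using that e2 by blast
      qed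
      define v where "v = - (s ^ r) + s * \<epsilon>"
      define u where "u = s * d"
      have srq: "(s ^ r) ^ q = s ^ r" by (simp only: pow_comm[of s r q] s(1))
      have vq: "v ^ q = - (s ^ r) - s * \<epsilon>"
        unfolding v_def by (simp add: frobq_add frobq_diff frobq_neg power_mult_distrib s(1) srq e(2))
      have s2r: "s ^ (2 * r) = s ^ 2 * s ^ (2 * (r - 1))"
      proof -
        have e: "2 * r = 2 + 2 * (r - 1)" using r1 by simp
        show ?thesis by (subst e) (rule power_add)
      qed
      have Nv: "v ^ (q + 1) = s ^ 2 * n"
      proof -
        have "v ^ (q + 1) = v * v ^ q" by simp
        also have "\<dots> = v * (- (s ^ r) - s * \<epsilon>)" by (simp only: vq)
        also have "\<dots> = (s ^ r) ^ 2 - s ^ 2 * \<epsilon> ^ 2" unfolding v_def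
          by (simp add: power2_eq_square algebra_simps)
        also have "(s ^ r) ^ 2 = s ^ (2 * r)" by (simp add: power_mult[symmetric] mult.commute)
        finally show ?thesis unfolding s2r e(1) \<delta>_def by (simp add: algebra_simps)
      qed
      have sq1: "s ^ (q + 1) = s ^ 2" using s(1) by (simp add: power2_eq_square)
      have Nu: "u ^ (q + 1) = s ^ 2 * n" unfolding u_def n_def by (simp only: power_mult_distrib sq1)
      have u0: "u \<noteq> 0" using s(2) d0 by (simp add: u_def)
      define w where "w = v / u"
      have "w ^ (q + 1) = 1" unfolding w_def power_divide Nv Nu using s(2) n0 by simp
      then obtain c0 where c0: "c0 \<noteq> 0" "c0 ^ (q - 1) = w" using hilbert90 by blast
      define x where "x = u / c0"
      have xy: "x * c0 = u" using c0 by (simp add: x_def)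
      have qS: "q = Suc (q - 1)" using q_ge3 by simp
      have xyq: "x * c0 ^ q = v"
      proof -
        have "c0 ^ q = c0 * c0 ^ (q - 1)" by (subst qS) (rule power_Suc)
        then have "x * c0 ^ q = u * w" using xy c0 by (simp add: algebra_simps)
        then show ?thesis using u0 by (simp add: w_def)
      qed
      have x0: "x \<noteq> 0" using u0 c0 by (simp add: x_def)
      have xqy: "x ^ q * c0 = v ^ q"
      proof -
        have "v ^ q = x ^ q * (c0 ^ q) ^ q" unfolding xyq[symmetric] by (simp add: power_mult_distrib)
        then show ?thesis by (simp add: pow_qq)
      qed
      have "B x c0 = 0"
        unfolding B_def xqy xyq xy using ell_sd[OF s(1)] by (simp add: u_def vq) (simp add: v_def)
      then have "?f (x + c0) - ?f x = ?f (0 + c0) - ?f 0"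
        using fadd[of x c0] fadd[of 0 c0] B0 by simp
      moreover have "inj (\<lambda>x. ?f (x + c0) - ?f x)"
        using pl c0(1) unfolding planar_def by (simp add: bij_is_inj)
      ultimately have "x = 0" by (meson injD)
      then show False using x0 by simp
    qed
  qed
qed

end


context ffq
begin

definition sqF :: "'a \<Rightarrow> bool" where
  "sqF a \<longleftrightarrow> (\<exists>t::'a. t ^ q = t \<and> t \<noteq> 0 \<and> t ^ 2 = a)"

definition chi :: "'a \<Rightarrow> int" where
  "chi a = (if a = 0 then 0 else if sqF a then 1 else -1)"

abbreviation Fq :: "'a set" where "Fq \<equiv> {x. x ^ q = x}"

lemma inF_add: "a ^ q = a \<Longrightarrow> b ^ q = b \<Longrightarrow> (a + b :: 'a) ^ q = a + b" by (simp add: frobq_add)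
lemma inF_diff: "a ^ q = a \<Longrightarrow> b ^ q = b \<Longrightarrow> (a - b :: 'a) ^ q = a - b" by (simp add: frobq_diff)
lemma inF_mult: "a ^ q = a \<Longrightarrow> b ^ q = b \<Longrightarrow> (a * b :: 'a) ^ q = a * b" by (simp add: power_mult_distrib)
lemma inF_div: "a ^ q = a \<Longrightarrow> b ^ q = b \<Longrightarrow> (a / b :: 'a) ^ q = a / b" by (simp add: power_divide)
lemma inF_pow: "a ^ q = a \<Longrightarrow> (a ^ j :: 'a) ^ q = a ^ j" by (simp add: pow_comm[of a j q])
lemma inF_1: "(1::'a) ^ q = 1" by simp
lemma inF_0: "(0::'a) ^ q = 0" using q_ge3 by (simp add: power_0_left)

lemma finite_Fq: "finite Fq" by simp
lemma card_Fq: "card Fq = q" by (rule card_F)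

lemma euler_F:
  assumes "(a::'a) ^ q = a" "a \<noteq> 0"
  shows "sqF a \<longleftrightarrow> a ^ ((q - 1) div 2) = 1"
proof -
  have "(\<exists>b. b ^ q = b \<and> b ^ 2 = a) \<longleftrightarrow> a ^ ((q - 1) div 2) = 1"
    by (rule euler[OF card_F q_odd q_ge3 assms(2)])
  moreover have "sqF a \<longleftrightarrow> (\<exists>b. b ^ q = b \<and> b ^ 2 = a)"
    unfolding sqF_def using assms(2) by auto
  ultimately show ?thesis by simp
qed

lemma e_pos: "(q - 1) div 2 > 0" using q_ge3 by simp

lemma chi_pow:
  assumes "(a::'a) ^ q = a"
  shows "(of_int (chi a) :: 'a) = a ^ ((q - 1) div 2)"
proof (cases "a = 0")
  case True then show ?thesis using e_pos by (simp add: chi_def power_0_left)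
next
  case False
  show ?thesis
  proof (cases "sqF a")
    case True then show ?thesis using False euler_F[OF assms False] by (simp add: chi_def)
  next
    case nsq: False
    have "a ^ ((q - 1) div 2) = 1 \<or> a ^ ((q - 1) div 2) = -1" by (rule pow_pm1[OF assms False q_odd])
    then show ?thesis using nsq False euler_F[OF assms False] by (auto simp: chi_def)
  qed
qed

lemma chi_range: "chi a \<in> {-1, 0, 1}" by (simp add: chi_def)

lemma of_int_inj3:
  assumes "i \<in> {-1, 0, 1::int}" "j \<in> {-1, 0, 1::int}" "(of_int i :: 'a) = of_int j"
  shows "i = j"
proof -
  have "(1::'a) \<noteq> -1"
  proof
    assume "(1::'a) = -1"
    then have "(1::'a) + 1 = 0" by simp
    then have "(2::'a) = 0" by (simp add: one_add_one)
    then show False using two_ne0 by simp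
  qed
  then show ?thesis using assms by auto
qed

lemma chi_mult:
  assumes "(a::'a) ^ q = a" "b ^ q = b"
  shows "chi (a * b) = chi a * chi b"
proof -
  have "(of_int (chi (a * b)) :: 'a) = of_int (chi a * chi b)"
    using chi_pow[OF inF_mult[OF assms]] chi_pow[OF assms(1)] chi_pow[OF assms(2)]
    by (simp add: power_mult_distrib)
  moreover have "chi a * chi b \<in> {-1, 0, 1}" using chi_range[of a] chi_range[of b] by auto
  ultimately show ?thesis using of_int_inj3 chi_range by blast
qed

lemma chi_1: "chi 1 = 1"
  unfolding chi_def sqF_def by (auto intro: exI[of _ 1])

lemma chi_sq:
  assumes "(a::'a) ^ q = a" "a \<noteq> 0"
  shows "chi (a * a) = 1"
  using chi_mult[OF assms(1) assms(1)] chi_range[of a] assms by (auto simp: chi_def)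

lemma exists_nonsq: "\<exists>g::'a. g ^ q = g \<and> g \<noteq> 0 \<and> chi g = -1"
proof (rule ccontr)
  assume nt: "\<not> ?thesis"
  have "g ^ ((q - 1) div 2) = 1" if g: "g ^ q = g" "g \<noteq> (0::'a)" for g
  proof -
    have "chi g \<noteq> -1" using nt g by blast
    then have "sqF g" using g by (auto simp: chi_def split: if_splits)
    then show ?thesis using euler_F[OF g] by simp
  qed
  then have "Fq - {0} \<subseteq> {g::'a. g ^ ((q - 1) div 2) = 1}" by auto
  then have "card (Fq - {0}) \<le> card {g::'a. g ^ ((q - 1) div 2) = 1}" by (intro card_mono) auto
  also have "\<dots> \<le> (q - 1) div 2" by (rule card_roots_pow[OF e_pos])
  finally have "q - 1 \<le> (q - 1) div 2" using card_Fq inF_0 by (simp add: card_Diff_singleton)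
  then show False using q_ge3 by simp
qed

lemma chi_sum: "(\<Sum>a\<in>Fq. chi a) = 0"
proof -
  obtain g :: 'a where g: "g ^ q = g" "g \<noteq> 0" "chi g = -1" using exists_nonsq by blast
  have "(\<Sum>a\<in>Fq. chi a) = (\<Sum>a\<in>Fq. chi (g * a))"
    by (rule sum.reindex_bij_witness[of _ "\<lambda>a. g * a" "\<lambda>a. a / g"])
       (use g in \<open>auto simp: inF_mult inF_div\<close>)
  also have "\<dots> = (\<Sum>a\<in>Fq. - chi a)"
    by (rule sum.cong) (use g in \<open>auto simp: chi_mult\<close>)
  also have "\<dots> = - (\<Sum>a\<in>Fq. chi a)" by (simp add: sum_negf)
  finally show ?thesis by simp
qed

lemma chi_corr:
  assumes b: "(b::'a) ^ q = b" and b': "b' ^ q = b'" and bb: "b \<noteq> b'"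
  shows "(\<Sum>x\<in>Fq. chi (x - b) * chi (x - b')) = -1"
proof -
  have fin: "finite Fq" by simp
  have "(\<Sum>x\<in>Fq. chi (x - b) * chi (x - b')) = (\<Sum>x\<in>Fq - {b'}. chi (x - b) * chi (x - b'))"
    by (rule sum.mono_neutral_right) (auto simp: chi_def)
  also have "\<dots> = (\<Sum>x\<in>Fq - {b'}. chi ((x - b) / (x - b')))"
  proof (rule sum.cong)
    fix x assume x: "x \<in> Fq - {b'}"
    then have xF: "x ^ q = x" and xb: "x - b' \<noteq> 0" by auto
    have e: "(x - b) * (x - b') = ((x - b) / (x - b')) * ((x - b') * (x - b'))" using xb by simp
    have "chi (x - b) * chi (x - b') = chi ((x - b) * (x - b'))"
      by (rule chi_mult[symmetric]) (use xF b b' in \<open>simp_all add: inF_diff\<close>)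
    also have "\<dots> = chi ((x - b) / (x - b')) * chi ((x - b') * (x - b'))"
      by (subst e) (rule chi_mult; use xF b b' in \<open>simp add: inF_div inF_diff inF_mult\<close>)
    also have "chi ((x - b') * (x - b')) = 1" by (rule chi_sq) (use xF b' xb in \<open>simp_all add: inF_diff\<close>)
    finally show "chi (x - b) * chi (x - b') = chi ((x - b) / (x - b'))" by simp
  qed simp
  also have "\<dots> = (\<Sum>z\<in>Fq - {1}. chi z)"
  proof (rule sum.reindex_bij_witness[of _ "\<lambda>z. b' + (b' - b) / (z - 1)" "\<lambda>x. (x - b) / (x - b')"])
    fix z assume z: "z \<in> Fq - {1}"
    then have z1: "z - 1 \<noteq> 0" by auto
    have bb0: "b' - b \<noteq> 0" using bb by simp
    have n1: "b' + (b' - b) / (z - 1) - b = (b' - b) * z / (z - 1)" using z1 by (simp add: field_simps)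
    have n2: "b' + (b' - b) / (z - 1) - b' = (b' - b) / (z - 1)" by simp
    show "(b' + (b' - b) / (z - 1) - b) / (b' + (b' - b) / (z - 1) - b') = z"
      unfolding n1 n2 using z1 bb0 by simp
    show "b' + (b' - b) / (z - 1) \<in> Fq - {b'}"
      using z z1 bb0 b b' by (auto simp: inF_add inF_div inF_diff)
  next
    fix x assume x: "x \<in> Fq - {b'}"
    then have x1: "x - b' \<noteq> 0" by auto
    have bb0: "b' - b \<noteq> 0" using bb by simp
    show "b' + (b' - b) / ((x - b) / (x - b') - 1) = x"
      using x1 bb0 by (simp add: field_simps)
    have "(x - b) / (x - b') \<noteq> 1" using x1 bb by (simp add: divide_eq_1_iff)
    then show "(x - b) / (x - b') \<in> Fq - {1}"
      using x x1 bb b b' by (auto simp: inF_div inF_diff)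
  qed simp
  also have "\<dots> = (\<Sum>z\<in>Fq. chi z) - chi 1"
    by (subst sum_diff1) auto
  finally show ?thesis using chi_sum chi_1 by simp
qed

lemma chi_self:
  assumes b: "(b::'a) ^ q = b"
  shows "(\<Sum>x\<in>Fq. chi (x - b) * chi (x - b)) = int q - 1"
proof -
  have "(\<Sum>x\<in>Fq. chi (x - b) * chi (x - b)) = (\<Sum>x\<in>Fq - {b}. 1)"
  proof (rule sum.mono_neutral_cong_right)
    fix x assume "x \<in> Fq - {b}"
    then show "chi (x - b) * chi (x - b) = 1"
      using chi_sq[of "x - b"] chi_mult[of "x - b" "x - b"] b by (simp add: inF_diff)
  qed (auto simp: chi_def)
  also have "\<dots> = int (card (Fq - {b}))" by simp
  also have "card (Fq - {b}) = q - 1" using b card_Fq by (simp add: card_Diff_singleton)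
  finally show ?thesis using q_ge3 by simp
qed

lemma bipartite:
  assumes A: "A \<subseteq> Fq" and B: "B \<subseteq> Fq" and AB: "\<forall>a\<in>A. \<forall>b\<in>B. chi (a - b) = 1"
  shows "card A * (card B * card B) \<le> card B * (q - card B)"
proof -
  have finA: "finite A" and finB: "finite B" by simp_all
  define S where "S x = (\<Sum>b\<in>B. chi (x - b))" for x
  have "(\<Sum>x\<in>Fq. S x * S x) = (\<Sum>b\<in>B. \<Sum>b'\<in>B. \<Sum>x\<in>Fq. chi (x - b) * chi (x - b'))"
    unfolding S_def by (simp add: sum_product sum.swap[of _ Fq] mult.commute)
  also have "\<dots> = (\<Sum>b\<in>B. int q - int (card B))"
  proof (rule sum.cong)
    fix b assume b: "b \<in> B"
    have "(\<Sum>b'\<in>B. \<Sum>x\<in>Fq. chi (x - b) * chi (x - b')) =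
          (\<Sum>x\<in>Fq. chi (x - b) * chi (x - b)) + (\<Sum>b'\<in>B - {b}. \<Sum>x\<in>Fq. chi (x - b) * chi (x - b'))"
      using b finB by (simp add: sum.remove)
    also have "(\<Sum>x\<in>Fq. chi (x - b) * chi (x - b)) = int q - 1" using b B by (intro chi_self) auto
    also have "(\<Sum>b'\<in>B - {b}. \<Sum>x\<in>Fq. chi (x - b) * chi (x - b')) = (\<Sum>b'\<in>B - {b}. -1)"
      by (rule sum.cong) (use b B in \<open>auto intro!: chi_corr\<close>)
    also have "(\<Sum>b'\<in>B - {b}. -1::int) = - int (card B) + 1"
    proof -
      have "card B \<ge> 1" using b finB by (metis One_nat_def Suc_leI card_gt_0_iff empty_iff)
      then show ?thesis using b finB by (simp add: card_Diff_singleton of_nat_diff)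
    qed
    finally show "(\<Sum>b'\<in>B. \<Sum>x\<in>Fq. chi (x - b) * chi (x - b')) = int q - int (card B)" by simp
  qed simp
  finally have tot: "(\<Sum>x\<in>Fq. S x * S x) = int (card B) * (int q - int (card B))" by (simp add: algebra_simps)
  have SA: "S a = int (card B)" if "a \<in> A" for a using AB that by (simp add: S_def)
  have "int (card A) * (int (card B) * int (card B)) = (\<Sum>a\<in>A. S a * S a)" by (simp add: SA)
  also have "\<dots> \<le> (\<Sum>x\<in>Fq. S x * S x)" by (rule sum_mono2) (use A in auto)
  finally have "int (card A) * (int (card B) * int (card B)) \<le> int (card B) * (int q - int (card B))"
    using tot by simp
  moreover have "card B \<le> q" using card_mono[OF _ B] card_Fq by simp
  ultimately have "int (card A * (card B * card B)) \<le> int (card B * (q - card B))"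
    by (simp add: of_nat_diff)
  then show ?thesis by (simp only: of_nat_le_iff)
qed

end


lemma numeric_int:
  fixes T U X Y :: int
  assumes T: "T \<ge> 3" and U: "U \<ge> 1" and h1: "U * T^3 - 1 \<le> X * (T - 1)"
    and h2: "X \<le> 2 * Y" and h3: "Y * Y + Y \<le> U * T^3"
  shows False
proof -
  have a: "(T - 1) * (U * T^2 + U * T) = U * T^3 - U * T" by (simp add: algebra_simps power2_eq_square power3_eq_cube)
  have UT: "U * T \<ge> 1" using mult_mono[of 1 U 1 T] T U by simp
  then have "(T - 1) * (U * T^2 + U * T) \<le> (T - 1) * X" using a h1 by (simp add: mult.commute)
  then have b: "U * T^2 + U * T \<le> X" using T by (simp add: mult_le_cancel_left)
  then have c: "U * T * (T + 1) \<le> 2 * Y" using h2 by (simp add: algebra_simps power2_eq_square)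
  have nn: "0 \<le> U * T * (T + 1)" using T U by simp
  then have d: "(U * T * (T + 1)) * (U * T * (T + 1)) \<le> (2 * Y) * (2 * Y)"
    using mult_mono[OF c c _ nn] c nn by simp
  have e1: "4 * T \<le> (T + 1) * (T + 1)"
  proof -
    have "(T - 1) * (T - 1) \<ge> 0" by simp
    then show ?thesis by (simp add: algebra_simps)
  qed
  have e2: "U \<le> U * U" using mult_left_mono[of 1 U U] U by simp
  have "4 * (U * T^3) = (U * T * T) * (4 * T)" by (simp add: algebra_simps power3_eq_cube)
  also have "\<dots> \<le> (U * U * T * T) * ((T + 1) * (T + 1))"
    using e1 e2 T U by (intro mult_mono) (auto intro: mult_right_mono)
  also have "\<dots> = (U * T * (T + 1)) * (U * T * (T + 1))" by (simp add: algebra_simps)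
  finally have f: "4 * (U * T^3) \<le> 4 * (Y * Y)" using d by simp
  have "U * T * (T + 1) \<ge> 1" using mult_mono[of 1 "U * T" 1 "T + 1"] UT T by simp
  then have "Y \<ge> 1" using c by simp
  then show False using f h3 by simp
qed

lemma numeric_nat:
  fixes t D X Y :: nat
  assumes t: "t \<ge> 3" and D: "D \<ge> 3" and h1: "t ^ D - 1 \<le> X * (t - 1)"
    and h2: "X \<le> 2 * Y" and h3: "Y * Y + Y \<le> t ^ D"
  shows False
proof -
  obtain d where dD: "D = d + 3" using D by (metis add.commute le_Suc_ex)
  have tD: "t ^ D = t ^ d * t ^ 3" by (simp add: dD power_add)
  have pos: "t ^ D \<ge> 1" using t by simp
  have U: "int (t ^ d) \<ge> 1" using t by simp
  show False
  proof (rule numeric_int[of "int t" "int (t ^ d)" "int X" "int Y"])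
    show "3 \<le> int t" using t by simp
    show "1 \<le> int (t ^ d)" by (rule U)
    have "int (t ^ D - 1) \<le> int (X * (t - 1))" using h1 by (simp only: of_nat_le_iff)
    then show "int (t ^ d) * int t ^ 3 - 1 \<le> int X * (int t - 1)"
      using pos t by (simp add: of_nat_diff tD)
    show "int X \<le> 2 * int Y" using h2 by simp
    have "int (Y * Y + Y) \<le> int (t ^ D)" using h3 by (simp only: of_nat_le_iff)
    then show "int Y * int Y + int Y \<le> int (t ^ d) * int t ^ 3" by (simp add: tD)
  qed
qed

context ffq
begin

lemma fix_mult: "(x::'a) ^ (p ^ a) = x \<Longrightarrow> x ^ (p ^ (a * j)) = x"
proof (induction j)
  case 0 then show ?case by simp
next
  case (Suc j)
  have "x ^ (p ^ (a * Suc j)) = (x ^ (p ^ (a * j))) ^ (p ^ a)"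
    by (simp add: power_add power_mult[symmetric] mult.commute)
  then show ?case using Suc by simp
qed

lemma fix_gcd:
  assumes "(x::'a) ^ (p ^ a) = x" "x ^ (p ^ b) = x" "0 < a"
  shows "x ^ (p ^ gcd a b) = x"
proof -
  obtain X Y where XY: "a * X = b * Y + gcd a b" using bezout_nat[of a b] assms(3) by auto
  have "x = x ^ (p ^ (a * X))" using fix_mult[OF assms(1)] by simp
  also have "\<dots> = (x ^ (p ^ (b * Y))) ^ (p ^ gcd a b)"
    unfolding XY by (simp add: power_add power_mult[symmetric])
  also have "\<dots> = x ^ (p ^ gcd a b)" using fix_mult[OF assms(2)] by simp
  finally show ?thesis by simp
qed

lemma sqF_sq: "(y::'a) ^ q = y \<Longrightarrow> y \<noteq> 0 \<Longrightarrow> sqF (y ^ 2)"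
  unfolding sqF_def by blast

lemma chi_sqF: "sqF a \<Longrightarrow> chi a = 1"
  unfolding chi_def sqF_def by auto

lemma sqF_inF: "sqF a \<Longrightarrow> a ^ q = a \<and> a \<noteq> 0"
  unfolding sqF_def by (auto simp: inF_pow)

lemma m_eq_2k:
  fixes n :: 'a
  assumes r: "r = p ^ k" and k: "0 < k" "k < m" and nF: "n ^ q = n" and n0: "n \<noteq> 0"
    and P: "\<forall>s::'a. s ^ q = s \<longrightarrow> s \<noteq> 0 \<longrightarrow> sqF (s ^ (2 * (r - 1)) - n)"
  shows "m = 2 * k"
proof -
  define F0 where "F0 = Fq - {0}"
  define Hp where "Hp = (\<lambda>s. s ^ (r - 1)) ` F0"
  define H where "H = (\<lambda>y. y ^ 2) ` Hp"
  have H_alt: "H = (\<lambda>s. s ^ (2 * (r - 1))) ` F0"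
    unfolding H_def Hp_def image_image by (simp add: power_mult[symmetric] mult.commute)
  have HF: "H \<subseteq> Fq" unfolding H_alt F0_def by (auto simp: inF_pow)
  have H0: "0 \<notin> H" unfolding H_alt F0_def by auto
  have chiH: "chi (z - n * h) = 1" if z: "z \<in> H" and h: "h \<in> H" for z h
  proof -
    obtain s where s: "s \<in> F0" "z = s ^ (2 * (r - 1))" using z H_alt by auto
    obtain s' where s': "s' \<in> F0" "h = s' ^ (2 * (r - 1))" using h H_alt by auto
    have sF: "s ^ q = s" "s \<noteq> 0" "s' ^ q = s'" "s' \<noteq> 0" using s s' by (auto simp: F0_def)
    have zh: "z / h = (s / s') ^ (2 * (r - 1))" using s s' by (simp add: power_divide)
    have "sqF (z / h - n)" unfolding zh using P sF by (simp add: inF_div)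
    then have c1: "chi (z / h - n) = 1" by (rule chi_sqF)
    have "h = (s' ^ (r - 1)) ^ 2" using s' by (simp add: power_mult[symmetric] mult.commute)
    then have "sqF h" using sF by (simp add: sqF_sq inF_pow)
    then have c2: "chi h = 1" by (rule chi_sqF)
    have hF: "h ^ q = h" "h \<noteq> 0" using h HF H0 by auto
    have zF: "z ^ q = z" using z HF by auto
    have "z - n * h = h * (z / h - n)" using hF by (simp add: field_simps)
    then have "chi (z - n * h) = chi h * chi (z / h - n)"
      using chi_mult[of h "z / h - n"] hF zF nF by (simp add: inF_div inF_diff)
    then show ?thesis using c1 c2 by simp
  qed
  define B where "B = (\<lambda>h. n * h) ` H"
  have cB: "card B = card H" unfolding B_def using n0 by (intro card_image) (auto intro: inj_onI)
  have BF: "B \<subseteq> Fq" unfolding B_def using HF nF by (auto simp: inF_mult)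
  have "card H * (card B * card B) \<le> card B * (q - card B)"
    by (rule bipartite[OF HF BF]) (auto simp: B_def chiH)
  then have bip: "card H * card H + card H \<le> q"
  proof -
    assume a: "card H * (card B * card B) \<le> card B * (q - card B)"
    have "(1::'a) \<in> F0" by (simp add: F0_def)
    then have "H \<noteq> {}" unfolding H_alt by blast
    then have "card H > 0" by (simp add: card_gt_0_iff)
    then have "card H * card H \<le> q - card H" using a cB by (simp add: mult.assoc)
    moreover have "card H \<le> q" using card_mono[OF _ HF] card_Fq by simp
    ultimately show ?thesis by simp
  qed
  have fF0: "finite F0" by simp
  have cF0: "card F0 = q - 1" unfolding F0_def using card_Fq inF_0 by (simp add: card_Diff_singleton)
  have pic: "card F0 \<le> card Hp * card {w\<in>F0. w ^ (r - 1) = 1}"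
    unfolding Hp_def
    by (rule pow_image_card) (auto simp: F0_def inF_div inF_mult)
  define g where "g = gcd k m"
  have g0: "0 < g" using k by (simp add: g_def)
  have "{w\<in>F0. w ^ (r - 1) = 1} \<subseteq> {w. w ^ (p ^ g) = w} - {0}"
  proof safe
    fix w assume w: "w \<in> F0" "w ^ (r - 1) = 1"
    have r1: "r = Suc (r - 1)" using r ppow_pos[of k] by simp
    have wr: "w ^ (p ^ k) = w" using w(2) r1 r by (metis power_Suc mult_1_right)
    have wq: "w ^ (p ^ m) = w" using w q_def by (simp add: F0_def)
    show "w ^ (p ^ g) = w" unfolding g_def by (rule fix_gcd[OF wr wq k(1)])
  next
    assume "(0::'a) \<in> F0" then show False by (simp add: F0_def)
  qed
  then have "card {w\<in>F0. w ^ (r - 1) = 1} \<le> card ({w::'a. w ^ (p ^ g) = w} - {0})"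
    by (intro card_mono) auto
  also have "\<dots> = card {w::'a. w ^ (p ^ g) = w} - 1"
    using g0 p_ge3 by (subst card_Diff_singleton) (auto simp: power_0_left)
  also have "\<dots> \<le> p ^ g - 1"
  proof -
    have "p ^ g > 1" using g0 p_ge3 by (intro one_less_power) auto
    then show ?thesis using card_roots_frob[of "p ^ g", where 'a='a] by simp
  qed
  finally have kb: "card {w\<in>F0. w ^ (r - 1) = 1} \<le> p ^ g - 1" .
  have low: "q - 1 \<le> card Hp * (p ^ g - 1)"
    using cF0 pic mult_le_mono2[OF kb, of "card Hp"] by linarith
  have fibHp: "card Hp \<le> card H * 2"
    unfolding H_def
  proof (rule fiber_card_le)
    fix y assume "y \<in> Hp"
    have "{y' \<in> Hp. y' ^ 2 = y ^ 2} \<subseteq> {y, -y}" by (auto simp: power2_eq_iff)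
    then have "card {y' \<in> Hp. y' ^ 2 = y ^ 2} \<le> card {y, -y}" by (intro card_mono) auto
    also have "\<dots> \<le> 2" by (simp add: card_insert_le_m1)
    finally show "card {y' \<in> Hp. y' ^ 2 = y ^ 2} \<le> 2" .
  qed simp
  obtain D where D: "m = g * D" unfolding g_def by (metis gcd_dvd2 dvd_def)
  obtain j where j: "k = g * j" unfolding g_def by (metis gcd_dvd1 dvd_def)
  have qD: "q = (p ^ g) ^ D" using q_def D by (simp add: power_mult)
  have jD: "j < D" using k j D g0 by simp
  have j1: "j \<ge> 1" using k j by (cases j) auto
  have "D \<le> 2"
  proof (rule ccontr)
    assume "\<not> D \<le> 2"
    then have D3: "D \<ge> 3" by simp
    show False
    proof (rule numeric_nat[of "p ^ g" D "card Hp" "card H"])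
      show "3 \<le> p ^ g" using power_increasing[of 1 g p] g0 p_ge3 by simp
      show "3 \<le> D" by (rule D3)
      show "(p ^ g) ^ D - 1 \<le> card Hp * (p ^ g - 1)" using low qD by simp
      show "card Hp \<le> 2 * card H" using fibHp by simp
      show "card H * card H + card H \<le> (p ^ g) ^ D" using bip qD by simp
    qed
  qed
  then have "D = 2" "j = 1" using jD j1 by auto
  then show ?thesis using D j by simp
qed

end


context ffq
begin

lemma m2k_arith:
  assumes r: "r = p ^ k" and m: "m = 2 * k" and k: "0 < k"
  shows "q = r * r" "r \<ge> 3" "odd r" "r + 1 = 2 * ((r + 1) div 2)"
    "(q - 1) div 2 = (r - 1) * ((r + 1) div 2)" "(of_nat r :: 'a) = 0" "q - 1 = (r - 1) * (r + 1)"
proof -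
  show qr: "q = r * r" using q_def r m by (simp add: power_mult power2_eq_square mult.commute)
  show r3: "r \<ge> 3" using power_increasing[of 1 k p] k p_ge3 r by simp
  show ro: "odd r" using r p_odd by simp
  show r2: "r + 1 = 2 * ((r + 1) div 2)" using ro by simp
  show q1: "q - 1 = (r - 1) * (r + 1)" using qr r3 by (simp add: algebra_simps)
  show "(q - 1) div 2 = (r - 1) * ((r + 1) div 2)"
    unfolding q1 by (subst r2) simp
  show "(of_nat r :: 'a) = 0" using r k by (simp add: of_nat_eq_0_iff_char_dvd CHAR_eq)
qed

lemma m2k_backward:
  fixes n :: 'a
  assumes r: "r = p ^ k" and m: "m = 2 * k" and k: "0 < k"
    and r4: "r mod 4 = 1" and nF: "n ^ q = n" and ns: "n ^ ((r + 1) div 2) = -1"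
  shows "\<forall>s::'a. s ^ q = s \<longrightarrow> s \<noteq> 0 \<longrightarrow> sqF (s ^ (2 * (r - 1)) - n)"
proof (intro allI impI)
  fix \<sigma> :: 'a assume \<sigma>: "\<sigma> ^ q = \<sigma>" "\<sigma> \<noteq> 0"
  note ar = m2k_arith[OF r m k]
  define s where "s = (r + 1) div 2"
  have sodd: "odd s" using r4 unfolding s_def by presburger
  have r2: "r + 1 = 2 * s" using ar(4) by (simp add: s_def)
  define z where "z = \<sigma> ^ (2 * (r - 1))"
  have sq1: "\<sigma> ^ (q - 1) = 1"
  proof -
    have "q = Suc (q - 1)" using q_ge3 by simp
    then have "\<sigma> * \<sigma> ^ (q - 1) = \<sigma> * 1" using \<sigma>(1) by (metis power_Suc mult_1_right)
    then show ?thesis using \<sigma>(2) by simp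
  qed
  have zs: "z ^ s = 1"
  proof -
    have "z ^ s = \<sigma> ^ ((r - 1) * (2 * s))" by (simp add: z_def power_mult[symmetric] mult.commute mult.left_commute)
    also have "(r - 1) * (2 * s) = q - 1" using ar(7) r2 by (simp only:)
    finally show ?thesis using sq1 by simp
  qed
  have zr1: "z ^ (r + 1) = 1"
  proof -
    have "z ^ (r + 1) = (z ^ s) ^ 2" unfolding r2 by (simp add: power_mult[symmetric] mult.commute)
    then show ?thesis using zs by simp
  qed
  have z0: "z \<noteq> 0" using \<sigma> by (simp add: z_def)
  have zF: "z ^ q = z" using \<sigma> by (simp add: z_def inF_pow)
  have nr1: "n ^ (r + 1) = 1"
  proof -
    have "n ^ (r + 1) = (n ^ s) ^ 2" unfolding r2 by (simp add: power_mult[symmetric] mult.commute)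
    then show ?thesis using ns by (simp add: s_def)
  qed
  have n0: "n \<noteq> 0" using nr1 by auto
  have m1: "(1::'a) \<noteq> -1"
  proof
    assume "(1::'a) = -1"
    then have "(1::'a) + 1 = 0" by simp
    then show False using two_ne0 by (simp add: one_add_one)
  qed
  have zn: "z \<noteq> n" using zs ns m1 by (auto simp: s_def)
  define A where "A = z - n"
  have A0: "A \<noteq> 0" using zn by (simp add: A_def)
  have AF: "A ^ q = A" using zF nF by (simp add: A_def inF_diff)
  have zr: "z ^ r = 1 / z" using zr1 z0 by (simp add: field_simps)
  have nr: "n ^ r = 1 / n" using nr1 n0 by (simp add: field_simps)
  have Ar: "A ^ r = - A / (z * n)"
  proof -
    have "A ^ r = z ^ r - n ^ r" using r by (simp add: A_def frob_diff)
    also have "\<dots> = - A / (z * n)" unfolding zr nr A_def using z0 n0 by (simp add: field_simps)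
    finally show ?thesis .
  qed
  have Ar1: "A ^ (r - 1) = - 1 / (z * n)"
  proof -
    have "r = Suc (r - 1)" using ar(2) by simp
    then have "A * A ^ (r - 1) = A ^ r" by (metis power_Suc)
    then have "A * A ^ (r - 1) = A * (- 1 / (z * n))" using Ar by simp
    then show ?thesis using A0 mult_left_cancel by blast
  qed
  have "A ^ ((q - 1) div 2) = (A ^ (r - 1)) ^ s" using ar(5) by (simp add: s_def power_mult)
  also have "\<dots> = (- 1) ^ s / (z ^ s * n ^ s)" unfolding Ar1 by (simp only: power_divide power_mult_distrib)
  also have "\<dots> = 1" using zs ns sodd by (simp add: s_def)
  finally have "A ^ ((q - 1) div 2) = 1" .
  then have "sqF A" using euler_F[OF AF A0] by simp
  then show "sqF (\<sigma> ^ (2 * (r - 1)) - n)" by (simp add: A_def z_def)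
qed

end


lemma coeff_const: "coeff [:c:] j = (if j = 0 then c else 0)"
  by (cases j) auto

context ffq
begin

lemma m1_ne: "(1::'a) \<noteq> -1"
proof
  assume "(1::'a) = -1"
  then have "(1::'a) + 1 = 0" by simp
  then show False using two_ne0 by (simp add: one_add_one)
qed

lemma m2k_forward:
  fixes n :: 'a
  assumes r: "r = p ^ k" and m: "m = 2 * k" and k: "0 < k"
    and nF: "n ^ q = n" and n0: "n \<noteq> 0"
    and P: "\<forall>\<sigma>::'a. \<sigma> ^ q = \<sigma> \<longrightarrow> \<sigma> \<noteq> 0 \<longrightarrow> sqF (\<sigma> ^ (2 * (r - 1)) - n)"
  shows "r mod 4 = 1 \<and> n ^ ((r + 1) div 2) = -1"
proof -
  note ar = m2k_arith[OF r m k]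
  define s where "s = (r + 1) div 2"
  have r2: "r + 1 = 2 * s" using ar(4) by (simp add: s_def)
  have s2: "s \<ge> 2" using ar(2) r2 by simp
  define F0 where "F0 = Fq - {0}"
  define Hp where "Hp = (\<lambda>\<sigma>. \<sigma> ^ (r - 1)) ` F0"
  define H where "H = (\<lambda>y. y ^ 2) ` Hp"
  have H_alt: "H = (\<lambda>\<sigma>. \<sigma> ^ (2 * (r - 1))) ` F0"
    unfolding H_def Hp_def image_image by (simp add: power_mult[symmetric] mult.commute)
  have sq1: "\<sigma> ^ (q - 1) = 1" if "\<sigma> \<in> F0" for \<sigma>
  proof -
    have \<sigma>F: "\<sigma> ^ q = \<sigma>" "\<sigma> \<noteq> 0" using that by (auto simp: F0_def)
    have qS: "Suc (q - 1) = q" using q_ge3 by simp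
    have "\<sigma> * \<sigma> ^ (q - 1) = \<sigma> ^ (Suc (q - 1))" by (simp only: power_Suc)
    also have "\<dots> = \<sigma>" by (simp only: qS \<sigma>F(1))
    finally show ?thesis using \<sigma>F(2) by simp
  qed
  define U where "U = {y::'a. y ^ (r + 1) = 1}"
  have HpU: "Hp \<subseteq> U"
  proof
    fix y assume "y \<in> Hp"
    then obtain \<sigma> where \<sigma>: "\<sigma> \<in> F0" "y = \<sigma> ^ (r - 1)" by (auto simp: Hp_def)
    have "y ^ (r + 1) = \<sigma> ^ ((r - 1) * (r + 1))" by (simp only: \<sigma>(2) power_mult)
    also have "\<dots> = 1" using sq1[OF \<sigma>(1)] ar(7) by simp
    finally show "y \<in> U" by (simp add: U_def)
  qed
  have cF0: "card F0 = q - 1" unfolding F0_def using card_Fq inF_0 by (simp add: card_Diff_singleton)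
  have pic: "card F0 \<le> card Hp * card {w\<in>F0. w ^ (r - 1) = 1}"
    unfolding Hp_def by (rule pow_image_card) (auto simp: F0_def inF_div inF_mult)
  have "card {w\<in>F0. w ^ (r - 1) = 1} \<le> card {w::'a. w ^ (r - 1) = 1}" by (intro card_mono) auto
  also have "\<dots> \<le> r - 1" by (rule card_roots_pow) (use ar(2) in simp)
  finally have kb: "card {w\<in>F0. w ^ (r - 1) = 1} \<le> r - 1" .
  have "(r - 1) * (r + 1) \<le> card Hp * card {w\<in>F0. w ^ (r - 1) = 1}" using pic cF0 ar(7) by simp
  also have "\<dots> \<le> card Hp * (r - 1)" using kb by (rule mult_le_mono2)
  finally have "(r - 1) * (r + 1) \<le> (r - 1) * card Hp" by (simp add: mult.commute)
  then have cHp1: "r + 1 \<le> card Hp" using ar(2) mult_le_cancel1[of "r - 1" "r + 1" "card Hp"] by simp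
  have cU: "card U \<le> r + 1" unfolding U_def by (rule card_roots_pow) simp
  have cle: "card Hp \<le> card U" using HpU by (intro card_mono) (auto simp: U_def)
  then have cHp: "card Hp = r + 1" using cHp1 cU by simp
  have "card Hp = card U" using cle cHp cU by simp
  then have HpU_eq: "Hp = U" using HpU by (intro card_subset_eq) (auto simp: U_def)
  have fib2: "card {y'\<in>Hp. y' ^ 2 = y ^ 2} = 2" if y: "y \<in> Hp" for y
  proof -
    have yU: "y ^ (r + 1) = 1" using y HpU_eq by (simp add: U_def)
    have y0: "y \<noteq> 0" using yU ar(2) by (auto simp: power_0_left)
    have "(- y) ^ (r + 1) = y ^ (r + 1)" using r2 by (simp add: power_mult)
    then have my: "- y \<in> Hp" using yU HpU_eq by (simp add: U_def)
    have "{y'\<in>Hp. y' ^ 2 = y ^ 2} = {y, -y}" using y my by (auto simp: power2_eq_iff)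
    moreover have "y \<noteq> -y"
    proof
      assume "y = -y"
      then have "2 * y = 0" by simp
      then show False using two_ne0 y0 by simp
    qed
    ultimately show ?thesis by simp
  qed
  have "card Hp = card H * 2" unfolding H_def by (rule fiber_card_eq) (use fib2 in auto)
  then have cH: "card H = s" using cHp r2 by simp
  define Hs where "Hs = {z::'a. z ^ s = 1}"
  have HHs: "H \<subseteq> Hs"
  proof
    fix z assume "z \<in> H"
    then obtain y where y: "y \<in> Hp" "z = y ^ 2" by (auto simp: H_def)
    have "z ^ s = y ^ (r + 1)" using y(2) r2 by (simp add: power_mult)
    then show "z \<in> Hs" using y(1) HpU_eq by (simp add: U_def Hs_def)
  qed
  have cHs: "card Hs \<le> s" unfolding Hs_def by (rule card_roots_pow) (use s2 in simp)
  have "card H \<le> card Hs" using HHs by (intro card_mono) (auto simp: Hs_def)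
  then have "card H = card Hs" using cH cHs by simp
  then have H_eq: "H = Hs" using HHs by (intro card_subset_eq) (auto simp: Hs_def)
  have sqH: "sqF (z - n)" if "z \<in> H" for z
    using that P unfolding H_alt F0_def by auto
  have eqH: "(1 - n ^ r * z) ^ s = (z - n) ^ s" if z: "z \<in> H" for z
  proof -
    have zs: "z ^ s = 1" using z H_eq by (simp add: Hs_def)
    have zr1: "z ^ (r + 1) = 1"
    proof -
      have "z ^ (r + 1) = (z ^ s) ^ 2" unfolding r2 by (simp add: power_mult[symmetric] mult.commute)
      then show ?thesis using zs by simp
    qed
    define A where "A = z - n"
    have sA: "sqF A" using sqH[OF z] by (simp add: A_def)
    then have AF: "A ^ q = A" and A0: "A \<noteq> 0" using sqF_inF by auto
    have Ae: "A ^ ((r - 1) * s) = 1" using euler_F[OF AF A0] sA ar(5) by (simp add: s_def)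
    have "A ^ (r * s) = A ^ ((r - 1) * s) * A ^ s"
    proof -
      have "r * s = (r - 1) * s + s" using ar(2) by (simp add: algebra_simps)
      then show ?thesis by (simp add: power_add)
    qed
    then have Ars: "A ^ (r * s) = A ^ s" using Ae by simp
    have "1 - n ^ r * z = z * A ^ r"
    proof -
      have Ar: "A ^ r = z ^ r - n ^ r" using r by (simp add: A_def frob_diff)
      have zz: "z * z ^ r = 1" using zr1 by (simp add: mult.commute)
      have "z * A ^ r = z * z ^ r - z * n ^ r" by (simp only: Ar right_diff_distrib)
      then show ?thesis using zz by (simp add: mult.commute)
    qed
    then have "(1 - n ^ r * z) ^ s = z ^ s * A ^ (r * s)" by (simp add: power_mult_distrib power_mult)
    also have "\<dots> = A ^ s" using zs Ars by simp
    finally show ?thesis by (simp add: A_def)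
  qed
  define c where "c = (- (n ^ r)) ^ s - 1"
  define R where "R = [:1, - (n ^ r):] ^ s - [:- n, 1:] ^ s - smult c ([:-1:] + monom 1 s)"
  have polyR: "poly R z = (1 - n ^ r * z) ^ s - (z - n) ^ s - c * (z ^ s - 1)" for z
    unfolding R_def by (simp add: poly_monom algebra_simps)
  have rootsR: "H \<subseteq> {z. poly R z = 0}"
  proof
    fix z assume z: "z \<in> H"
    have "z ^ s = 1" using z H_eq by (simp add: Hs_def)
    then show "z \<in> {z. poly R z = 0}" using eqH[OF z] by (simp add: polyR)
  qed
  have coeffR: "coeff R j = of_nat (s choose j) * (- (n ^ r)) ^ j - of_nat (s choose j) * (- n) ^ (s - j)
       - c * (coeff [:-1:] j + (if s = j then 1 else 0))" if "j \<le> s" for j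
    unfolding R_def using that by (simp add: coeff_linear_poly_power coeff_monom)
  have degR: "degree R \<le> s"
  proof -
    have d1: "degree ([:1, - (n ^ r):] ^ s) \<le> s"
      using degree_power_le[of "[:1, - (n ^ r):]" s] by (simp add: le_trans)
    have d2: "degree ([:- n, 1:] ^ s) \<le> s"
      using degree_power_le[of "[:- n, 1:]" s] by simp
    have d3: "degree (smult c ([:-1:] + monom 1 s)) \<le> s"
      by (rule le_trans[OF degree_smult_le]) (simp add: degree_add_le degree_monom_le)
    show ?thesis unfolding R_def by (intro degree_diff_le d1 d2 d3)
  qed
  have cRs: "coeff R s = 0" using coeffR[of s] s2 by (simp add: c_def coeff_const)
  have R0: "R = 0"
  proof (rule ccontr)
    assume Rn: "R \<noteq> 0"
    have "degree R \<noteq> s" using cRs Rn leading_coeff_0_iff[of R] by auto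
    then have dlt: "degree R < s" using degR by simp
    have "card H \<le> card {z. poly R z = 0}" using rootsR by (intro card_mono) auto
    then have "s \<le> card {z. poly R z = 0}" using cH by simp
    also have "\<dots> \<le> degree R" by (rule card_poly_roots_bound[OF Rn])
    finally show False using dlt by simp
  qed
  have ofs: "(of_nat s :: 'a) \<noteq> 0"
  proof
    assume "(of_nat s :: 'a) = 0"
    then have "(of_nat (2 * s) :: 'a) = 0" by simp
    then have "(of_nat (r + 1) :: 'a) = 0" using r2 by simp
    then show False using ar(6) by simp
  qed
  have E1: "- (n ^ r) = (- n) ^ (s - 1)"
  proof -
    have "coeff R 1 = 0" using R0 by simp
    then have "of_nat s * (- (n ^ r)) - of_nat s * (- n) ^ (s - 1) = (0::'a)"
      using coeffR[of 1] s2 by (simp add: coeff_const)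
    then have "of_nat s * ((- (n ^ r)) - (- n) ^ (s - 1)) = (0::'a)" by (simp add: algebra_simps)
    then show ?thesis using ofs by simp
  qed
  have mn0: "- n \<noteq> 0" using n0 by simp
  have ns1: "(- n) ^ s = 1"
  proof (cases "s = 2")
    case True
    then have "r = 3" using r2 by simp
    then have "n ^ 3 = n" using E1 True by simp
    then have "n * n ^ 2 = n * 1" by (simp add: power3_eq_cube power2_eq_square)
    then have "n ^ 2 = 1" using n0 by simp
    then show ?thesis using True by simp
  next
    case False
    then have s3: "s \<ge> 3" using s2 by simp
    have ofs1: "(of_nat (s - 1) :: 'a) \<noteq> 0"
    proof
      assume a: "(of_nat (s - 1) :: 'a) = 0"
      have e: "2 * (s - 1) + 1 = r" using r2 s2 by simp
      have "(of_nat (2 * (s - 1) + 1) :: 'a) = of_nat r" by (simp only: e)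
      then have "2 * (of_nat (s - 1) :: 'a) + 1 = 0" using ar(6) by (simp add: add.commute)
      then show False using a by simp
    qed
    have ch: "(of_nat (s choose 2) :: 'a) \<noteq> 0"
    proof
      assume a: "(of_nat (s choose 2) :: 'a) = 0"
      have ev: "even (s * (s - 1))"
      proof (cases "even s")
        case True then show ?thesis by simp
      next
        case False then have "even (s - 1)" by presburger
        then show ?thesis by simp
      qed
      have "(s choose 2) * 2 = s * (s - 1)" using ev by (simp add: choose_two)
      then have "(of_nat (s * (s - 1)) :: 'a) = of_nat ((s choose 2) * 2)"
        by (simp only: \<open>(s choose 2) * 2 = s * (s - 1)\<close>)
      then have "(of_nat (s * (s - 1)) :: 'a) = of_nat (s choose 2) * 2" by simp
      then have "(of_nat s :: 'a) * of_nat (s - 1) = 0" using a by simp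
      then show False using ofs ofs1 by simp
    qed
    have E2: "(- (n ^ r)) ^ 2 = (- n) ^ (s - 2)"
    proof -
      have "coeff R 2 = 0" using R0 by simp
      then have "of_nat (s choose 2) * (- (n ^ r)) ^ 2 - of_nat (s choose 2) * (- n) ^ (s - 2) = (0::'a)"
        using coeffR[of 2] s3 by (simp add: coeff_const)
      then have "of_nat (s choose 2) * ((- (n ^ r)) ^ 2 - (- n) ^ (s - 2)) = (0::'a)" by (simp add: algebra_simps)
      then show ?thesis using ch by simp
    qed
    have "(- n) ^ (s - 2) * (- n) ^ s = (- n) ^ (2 * (s - 1))"
    proof -
      have "s - 2 + s = 2 * (s - 1)" using s3 by simp
      then show ?thesis by (simp only: power_add[symmetric])
    qed
    also have "\<dots> = ((- n) ^ (s - 1)) ^ 2" by (simp only: power_mult[symmetric] mult.commute)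
    also have "\<dots> = (- n) ^ (s - 2)" using E1 E2 by simp
    finally have "(- n) ^ (s - 2) * (- n) ^ s = (- n) ^ (s - 2) * 1" by simp
    then show ?thesis using mn0 by simp
  qed
  have nr1: "n ^ (r + 1) = 1"
  proof -
    have "n ^ (r + 1) = n ^ r * n" by simp
    also have "\<dots> = (- n) ^ (s - 1) * (- n)"
    proof -
      have "n ^ r = - ((- n) ^ (s - 1))" using E1 by (metis minus_minus)
      then show ?thesis by simp
    qed
    also have "\<dots> = (- n) ^ (Suc (s - 1))" by (simp only: power_Suc2)
    also have "Suc (s - 1) = s" using s2 by simp
    finally show ?thesis using ns1 by simp
  qed
  have oneH: "(1::'a) \<in> H" unfolding H_alt F0_def by (auto intro: image_eqI[of _ _ 1])
  define B where "B = 1 - n"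
  have sB: "sqF B" using sqH[OF oneH] by (simp add: B_def)
  then have BF: "B ^ q = B" and B0: "B \<noteq> 0" using sqF_inF by auto
  have Be: "(B ^ (r - 1)) ^ s = 1" using euler_F[OF BF B0] sB ar(5) by (simp add: s_def power_mult)
  have nr: "n ^ r = 1 / n" using nr1 n0 by (simp add: field_simps)
  have Br: "B ^ r = - B / n"
  proof -
    have "B ^ r = 1 - n ^ r" using r by (simp add: B_def frob_diff)
    also have "\<dots> = - B / n" unfolding nr B_def using n0 by (simp add: field_simps)
    finally show ?thesis .
  qed
  have Br1: "B ^ (r - 1) = - 1 / n"
  proof -
    have "r = Suc (r - 1)" using ar(2) by simp
    then have "B * B ^ (r - 1) = B ^ r" by (simp only: power_Suc[symmetric])
    then have "B * B ^ (r - 1) = B * (- 1 / n)" using Br by simp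
    then show ?thesis using B0 mult_left_cancel by blast
  qed
  have "(- 1) ^ s / n ^ s = (1::'a)" using Be unfolding Br1 by (simp only: power_divide)
  then have nsv: "n ^ s = (- 1) ^ s" using n0 by (simp add: field_simps)
  have nsn1: "n ^ s \<noteq> 1"
  proof
    assume "n ^ s = 1"
    then have "n \<in> H" using H_eq by (simp add: Hs_def)
    then have "sqF (n - n)" by (rule sqH)
    then have "(n - n) ^ q = n - n \<and> n - n \<noteq> 0" by (rule sqF_inF)
    then show False by simp
  qed
  have "(n ^ s) ^ 2 = 1"
  proof -
    have "(n ^ s) ^ 2 = n ^ (r + 1)" unfolding r2 by (simp add: power_mult[symmetric] mult.commute)
    then show ?thesis using nr1 by simp
  qed
  then have nsm: "n ^ s = -1" using nsn1 by (simp add: power2_eq_1_iff)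
  have "odd s"
  proof
    assume "even s"
    then have "(- 1::'a) ^ s = 1" by simp
    then show False using nsv nsm m1_ne by simp
  qed
  then have "r mod 4 = 1" using r2 by presburger
  then show ?thesis using nsm by (simp add: s_def)
qed

end


theorem theorem2p4:
  fixes p m k q :: nat and b c :: "'a::{field,finite}"
  assumes "prime p" and "odd p" and "q = p ^ m"
    and "card (UNIV :: 'a set) = q ^ 2"
    and "0 < k" and "k < m"
    and "normq q b \<noteq> normq q c"
  shows "planar (\<lambda>x. x ^ (q + 1) + (b * (x^2) ^ q + c * x^2) ^ (p ^ k)) \<longleftrightarrow>
           (p ^ k mod 4 = 1 \<and> m = 2 * k \<and>
            normq q (b - c ^ q) ^ ((p ^ k + 1) div 2) =
              - ((normq q b - normq q c) ^ (p ^ k + 1)))"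
proof -
  interpret ffq p m q "TYPE('a)"
    using assms by unfold_locales auto
  define r where "r = p ^ k"
  define \<Delta> where "\<Delta> = c ^ (q + 1) - b ^ (q + 1)"
  define d where "d = (c ^ q - b) / \<Delta>"
  define n where "n = d ^ (q + 1)"
  define s where "s = (r + 1) div 2"
  have nb: "b ^ (q + 1) \<noteq> c ^ (q + 1)" using assms(7) by (simp add: normq_def)
  have Delta0: "\<Delta> \<noteq> 0" using nb by (simp add: \<Delta>_def)
  have PI: "planar (\<lambda>x. x ^ (q + 1) + (b * (x ^ 2) ^ q + c * x ^ 2) ^ r) \<longleftrightarrow>
    (\<forall>s::'a. s ^ q = s \<longrightarrow> s \<noteq> 0 \<longrightarrow> (\<exists>t. t ^ q = t \<and> t \<noteq> 0 \<and> t ^ 2 = s ^ (2 * (r - 1)) - n))"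
    unfolding n_def d_def \<Delta>_def by (rule planar_iff_P[OF r_def nb])
  have PI': "planar (\<lambda>x. x ^ (q + 1) + (b * (x ^ 2) ^ q + c * x ^ 2) ^ r) \<longleftrightarrow>
    (\<forall>s::'a. s ^ q = s \<longrightarrow> s \<noteq> 0 \<longrightarrow> sqF (s ^ (2 * (r - 1)) - n))"
    unfolding PI sqF_def by simp
  have nF: "n ^ q = n" unfolding n_def by (rule norm_inF)
  have d0: "d \<noteq> 0"
  proof
    assume "d = 0"
    then have "c ^ q = b" using Delta0 by (simp add: d_def)
    then have "b ^ (q + 1) = (c ^ q) ^ (q + 1)" by simp
    also have "\<dots> = (c ^ (q + 1)) ^ q" by (rule pow_comm)
    finally show False using nb norm_inF by simp
  qed
  have n0: "n \<noteq> 0" using d0 by (simp add: n_def)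
  have k: "0 < k" "k < m" using assms by auto
  have r1: "r + 1 = 2 * s" unfolding s_def r_def using p_odd by simp
  have DeltaF: "\<Delta> ^ q = \<Delta>" unfolding \<Delta>_def by (simp only: frobq_diff norm_inF)
  have Dq1: "\<Delta> ^ (q + 1) = \<Delta> ^ 2" using DeltaF by (simp add: power2_eq_square)
  have ev: "even (q + 1)" using q_odd by simp
  have Nswap: "(c ^ q - b) ^ (q + 1) = (b - c ^ q) ^ (q + 1)"
  proof -
    have "(c ^ q - b) ^ (q + 1) = (- (b - c ^ q)) ^ (q + 1)" by simp
    also have "\<dots> = (b - c ^ q) ^ (q + 1)" using ev by (rule power_minus_even)
    finally show ?thesis .
  qed
  have n_eq: "n = normq q (b - c ^ q) / \<Delta> ^ 2"
    unfolding n_def d_def normq_def by (simp only: power_divide Nswap Dq1)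
  have evr: "even (r + 1)" using r1 by simp
  have Dsw: "(normq q b - normq q c) ^ (r + 1) = \<Delta> ^ (r + 1)"
  proof -
    have "normq q b - normq q c = - \<Delta>" by (simp add: normq_def \<Delta>_def)
    then show ?thesis using evr by (simp add: power_minus_even)
  qed
  have ns_iff: "n ^ s = -1 \<longleftrightarrow> normq q (b - c ^ q) ^ s = - ((normq q b - normq q c) ^ (r + 1))"
  proof -
    have D2s: "(\<Delta> ^ 2) ^ s = \<Delta> ^ (r + 1)" unfolding r1 by (simp add: power_mult)
    have "n ^ s = normq q (b - c ^ q) ^ s / \<Delta> ^ (r + 1)" unfolding n_eq power_divide D2s ..
    moreover have "\<Delta> ^ (r + 1) \<noteq> 0" using Delta0 by simp
    moreover have aux: "(X / Y = -1) \<longleftrightarrow> X = - Y" if "Y \<noteq> 0" for X Y :: 'a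
      using that by (auto simp: divide_eq_eq)
    ultimately show ?thesis unfolding Dsw by simp
  qed
  show ?thesis
  proof
    assume pl: "planar (\<lambda>x. x ^ (q + 1) + (b * (x ^ 2) ^ q + c * x ^ 2) ^ (p ^ k))"
    then have P: "\<forall>s::'a. s ^ q = s \<longrightarrow> s \<noteq> 0 \<longrightarrow> sqF (s ^ (2 * (r - 1)) - n)"
      using PI' r_def by simp
    have m2: "m = 2 * k" by (rule m_eq_2k[OF r_def k nF n0 P])
    have "r mod 4 = 1 \<and> n ^ ((r + 1) div 2) = -1" by (rule m2k_forward[OF r_def m2 k(1) nF n0 P])
    then show "p ^ k mod 4 = 1 \<and> m = 2 * k \<and>
            normq q (b - c ^ q) ^ ((p ^ k + 1) div 2) = - ((normq q b - normq q c) ^ (p ^ k + 1))"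
      using ns_iff m2 by (simp add: r_def s_def)
  next
    assume h: "p ^ k mod 4 = 1 \<and> m = 2 * k \<and>
            normq q (b - c ^ q) ^ ((p ^ k + 1) div 2) = - ((normq q b - normq q c) ^ (p ^ k + 1))"
    then have r4: "r mod 4 = 1" and m2: "m = 2 * k" and ns: "n ^ ((r + 1) div 2) = -1"
      using ns_iff by (auto simp: r_def s_def)
    have P: "\<forall>s::'a. s ^ q = s \<longrightarrow> s \<noteq> 0 \<longrightarrow> sqF (s ^ (2 * (r - 1)) - n)"
      by (rule m2k_backward[OF r_def m2 k(1) r4 nF ns])
    then show "planar (\<lambda>x. x ^ (q + 1) + (b * (x ^ 2) ^ q + c * x ^ 2) ^ (p ^ k))"
      using PI' r_def by simp
  qed
qed

end
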